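(* Let $X$ be a rotationally invariant isotropic random vector in $\mathbb{R}^n$ and let $\vartheta$ be uniformly distributed on $S^{n-1}$. Then $\Lambda_X(\xi)\geqslant\Lambda_{\sqrt n\vartheta}(\xi)$ for every $\xi\in\mathbb{R}^n$, and consequently $\Lambda_X^\ast\leqslant\Lambda^\ast_{\sqrt n\vartheta}$ pointwise on $\mathbb{R}^n$.
   Context: A random vector $X$ is isotropic if $\mathbb{E}\langle X,\theta\rangle=0$ and $\mathbb{E}\langle X,\theta\rangle^2=1$ for all $\theta\in S^{n-1}$. $\Lambda_X(\xi)=\log\mathbb{E}e^{\langle X,\xi\rangle}\in(-\infty,+\infty]$ and $\Lambda^\ast_X(x)=\sup_\xi(\langle x,\xi\rangle-\Lambda_X(\xi))$. *)

theory Defs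
  imports "HOL-Probability.Probability"
begin

text \<open>Law of a random vector uniformly distributed on the unit sphere S^(n-1):
  the normalized surface (= cone) measure, obtained as the image of the uniform
  probability on the unit ball under the radial projection x / |x|.\<close>
definition unif_sphere :: "'a::euclidean_space measure" where
  "unif_sphere = distr (uniform_measure lborel (ball 0 1)) borel (\<lambda>x. x /\<^sub>R norm x)"

definition isotropic :: "'s measure \<Rightarrow> ('s \<Rightarrow> 'a::euclidean_space) \<Rightarrow> bool" where
  "isotropic M X \<longleftrightarrow> (\<forall>\<theta>. norm \<theta> = 1 \<longrightarrow>
      integrable M (\<lambda>\<omega>. X \<omega> \<bullet> \<theta>) \<and> (\<integral>\<omega>. X \<omega> \<bullet> \<theta> \<partial>M) = 0 \<and>
      integrable M (\<lambda>\<omega>. (X \<omega> \<bullet> \<theta>)\<^sup>2) \<and> (\<integral>\<omega>. (X \<omega> \<bullet> \<theta>)\<^sup>2 \<partial>M) = 1)"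

definition rot_invariant :: "'s measure \<Rightarrow> ('s \<Rightarrow> 'a::euclidean_space) \<Rightarrow> bool" where
  "rot_invariant M X \<longleftrightarrow> (\<forall>U. orthogonal_transformation U \<longrightarrow>
      distr M borel (\<lambda>\<omega>. U (X \<omega>)) = distr M borel X)"

definition log_laplace :: "'s measure \<Rightarrow> ('s \<Rightarrow> 'a::euclidean_space) \<Rightarrow> 'a \<Rightarrow> ereal" where
  "log_laplace M X \<xi> =
     (let m = (\<integral>\<^sup>+\<omega>. ennreal (exp (X \<omega> \<bullet> \<xi>)) \<partial>M)
      in if m = \<infinity> then \<infinity> else ereal (ln (enn2real m)))"

definition legendre :: "('a::euclidean_space \<Rightarrow> ereal) \<Rightarrow> 'a \<Rightarrow> ereal" where
  "legendre \<Lambda> x = (SUP \<xi>. ereal (x \<bullet> \<xi>) - \<Lambda> \<xi>)"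

end

theory Submission
  imports Defs "HOL-Analysis.Analysis"
begin

lemma lborel_orth_vec:
  fixes V :: "real^'n::{finite,wellorder} \<Rightarrow> real^'n::_"
  assumes V: "orthogonal_transformation V"
  shows "distr lborel borel V = lborel"
proof -
  have lin: "linear V" using V by (simp add: orthogonal_transformation_linear)
  have Vm[measurable]: "V \<in> borel_measurable borel"
    by (intro borel_measurable_continuous_onI linear_continuous_on) (use lin linear_linear in blast)
  have bij: "bij V" using V by (rule orthogonal_transformation_bij)
  have iV: "orthogonal_transformation (inv V)" using V by (rule orthogonal_transformation_inv)
  show ?thesis
  proof (rule lborel_eqI[symmetric])
    fix l u :: "real^'n::{finite,wellorder}"
    assume le: "\<And>b. b \<in> Basis \<Longrightarrow> l \<bullet> b \<le> u \<bullet> b"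
    have eq: "V -` box l u = inv V ` box l u" using bij by (rule bij_vimage_eq_inv_image)
    have bs: "V -` box l u \<in> sets lborel" using measurable_sets_borel[OF Vm, of "box l u"] by simp
    have "emeasure (distr lborel borel V) (box l u) = emeasure lborel (V -` box l u)"
      by (simp add: emeasure_distr)
    also have "\<dots> = emeasure lebesgue (inv V ` box l u)"
      using bs eq by simp
    also have "\<dots> = ennreal (measure lebesgue (inv V ` box l u))"
      using measurable_orthogonal_image[OF iV lmeasurable_box] by (simp add: emeasure_eq_measure2)
    also have "\<dots> = ennreal (measure lebesgue (box l u))"
      using measure_orthogonal_image[OF iV lmeasurable_box] by simp
    also have "\<dots> = emeasure lborel (box l u)"
      by (simp add: emeasure_eq_measure2)
    finally show "emeasure (distr lborel borel V) (box l u) = (\<Prod>b\<in>Basis. (u - l) \<bullet> b)"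
      using le by (simp add: emeasure_lborel_box_eq)
  qed simp
qed


typedef (overloaded) ('a::euclidean_space) bidx = "Basis :: 'a set"
  using nonempty_Basis by blast

instance bidx :: (euclidean_space) finite
proof
  have "(UNIV :: 'a bidx set) = Abs_bidx ` Basis"
    using type_definition.Abs_image[OF type_definition_bidx] by (rule sym)
  then show "finite (UNIV :: 'a bidx set)" by (metis finite_imageI finite_Basis)
qed
instantiation bidx :: (euclidean_space) wellorder
begin
definition less_eq_bidx :: "'a bidx \<Rightarrow> 'a bidx \<Rightarrow> bool" where
  "less_eq_bidx x y \<longleftrightarrow> to_nat x \<le> to_nat y"
definition less_bidx :: "'a bidx \<Rightarrow> 'a bidx \<Rightarrow> bool" where
  "less_bidx x y \<longleftrightarrow> to_nat x < to_nat y"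
instance
proof
  fix x y z :: "'a bidx"
  show "(x < y) = (x \<le> y \<and> \<not> y \<le> x)" unfolding less_eq_bidx_def less_bidx_def by (rule less_le_not_le)
  show "x \<le> x" unfolding less_eq_bidx_def by (rule order_refl)
  show "x \<le> y \<Longrightarrow> y \<le> z \<Longrightarrow> x \<le> z" unfolding less_eq_bidx_def by (rule order_trans)
  show "x \<le> y \<Longrightarrow> y \<le> x \<Longrightarrow> x = y" unfolding less_eq_bidx_def
  proof -
    assume "to_nat x \<le> to_nat y" "to_nat y \<le> to_nat x"
    then have "to_nat x = to_nat y" by (rule antisym)
    then show "x = y" by (rule injD[OF inj_to_nat])
  qed
  show "x \<le> y \<or> y \<le> x" unfolding less_eq_bidx_def by (rule nat_le_linear)
next
  fix P :: "'a bidx \<Rightarrow> bool" and a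
  assume H: "\<And>x. (\<And>y. y < x \<Longrightarrow> P y) \<Longrightarrow> P x"
  show "P a"
  proof (induct a rule: measure_induct_rule[of to_nat])
    case (less x)
    show ?case by (rule H) (rule less, simp add: less_bidx_def)
  qed
qed
end
definition Lc :: "'a::euclidean_space \<Rightarrow> real^('a bidx)" where
  "Lc x = (\<chi> i. x \<bullet> Rep_bidx i)"
definition Li :: "real^('a::euclidean_space bidx) \<Rightarrow> 'a" where
  "Li v = (\<Sum>i\<in>UNIV. (v $ i) *\<^sub>R Rep_bidx i)"

lemma Rep_bidx_Basis: "Rep_bidx i \<in> Basis"
  using Rep_bidx by blast

lemma range_Rep_bidx: "range Rep_bidx = (Basis :: 'a::euclidean_space set)"
  by (rule type_definition.Rep_range[OF type_definition_bidx])

lemma bij_Rep_bidx: "bij_betw Rep_bidx UNIV (Basis :: 'a::euclidean_space set)"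
  unfolding bij_betw_def using range_Rep_bidx
  by (simp add: inj_on_def Rep_bidx_inject)

lemma ball_Basis_bidx: "(\<forall>b\<in>(Basis::'a::euclidean_space set). P b) \<longleftrightarrow> (\<forall>i. P (Rep_bidx i))"
  by (auto simp flip: range_Rep_bidx)

lemma sum_bidx: "(\<Sum>i\<in>UNIV. f (Rep_bidx i)) = (\<Sum>b\<in>(Basis::'a::euclidean_space set). f b)"
  using sum.reindex_bij_betw[OF bij_Rep_bidx] by blast

lemma prod_bidx: "(\<Prod>i\<in>UNIV. f (Rep_bidx i)) = (\<Prod>b\<in>(Basis::'a::euclidean_space set). f b)"
  using prod.reindex_bij_betw[OF bij_Rep_bidx] by blast

lemma Li_Lc [simp]: "Li (Lc x) = x"
  unfolding Li_def Lc_def using sum_bidx[of "\<lambda>b. (x \<bullet> b) *\<^sub>R b"]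
  by (simp add: euclidean_representation)

lemma Li_inner: "Li v \<bullet> Rep_bidx i = v $ i"
proof -
  have "Li v \<bullet> Rep_bidx i = (\<Sum>j\<in>UNIV. v $ j * (Rep_bidx j \<bullet> Rep_bidx i))"
    by (simp add: Li_def inner_sum_left)
  also have "\<dots> = (\<Sum>j\<in>UNIV. if j = i then v $ j else 0)"
    by (intro sum.cong refl) (simp add: inner_Basis Rep_bidx_Basis Rep_bidx_inject)
  finally show ?thesis by simp
qed

lemma Lc_Li [simp]: "Lc (Li v) = v"
  by (simp add: Lc_def Li_inner vec_eq_iff)

lemma linear_Lc: "linear Lc"
  by (rule linearI) (simp_all add: Lc_def vec_eq_iff inner_add_left)

lemma linear_Li: "linear Li"
  by (rule linearI) (simp_all add: Li_def sum.distrib scaleR_add_left scaleR_sum_right)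

lemma Lc_measurable[measurable]: "Lc \<in> borel_measurable borel"
  by (intro borel_measurable_continuous_onI linear_continuous_on) (use linear_Lc linear_linear in blast)

lemma Li_measurable[measurable]: "Li \<in> borel_measurable borel"
  by (intro borel_measurable_continuous_onI linear_continuous_on) (use linear_Li linear_linear in blast)

lemma distr_Lc: "distr lborel borel Lc = lborel"
proof (rule lborel_eqI[symmetric])
  fix l u :: "real^('a::euclidean_space bidx)"
  assume le: "\<And>b. b \<in> Basis \<Longrightarrow> l \<bullet> b \<le> u \<bullet> b"
  have le': "l $ i \<le> u $ i" for i
    using le[of "axis i 1"] by (simp add: cart_eq_inner_axis)
  have vim: "Lc -` box l u = box (Li l) (Li u)"
  proof -
    have "x \<in> box (Li l) (Li u) \<longleftrightarrow> (\<forall>i. l $ i < x \<bullet> Rep_bidx i \<and> x \<bullet> Rep_bidx i < u $ i)" for x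
    proof -
      have "x \<in> box (Li l) (Li u) \<longleftrightarrow> (\<forall>b\<in>Basis. Li l \<bullet> b < x \<bullet> b \<and> x \<bullet> b < Li u \<bullet> b)"
        by (simp add: mem_box)
      also have "\<dots> \<longleftrightarrow> (\<forall>i. Li l \<bullet> Rep_bidx i < x \<bullet> Rep_bidx i \<and> x \<bullet> Rep_bidx i < Li u \<bullet> Rep_bidx i)"
        by (rule ball_Basis_bidx)
      finally show ?thesis by (simp add: Li_inner)
    qed
    then show ?thesis by (auto simp: mem_box_cart Lc_def)
  qed
  have "emeasure (distr lborel borel Lc) (box l u) = emeasure lborel (box (Li l) (Li u) :: 'a set)"
    by (simp add: emeasure_distr vim)
  also have "\<dots> = (\<Prod>b\<in>(Basis::'a set). (Li u - Li l) \<bullet> b)"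
    using le' by (subst emeasure_lborel_box_eq) (simp add: ball_Basis_bidx Li_inner inner_diff_left)
  also have "\<dots> = (\<Prod>i\<in>UNIV. u $ i - l $ i)"
    using prod_bidx[of "\<lambda>b. (Li u - Li l) \<bullet> b"] by (simp add: inner_diff_left Li_inner)
  also have "\<dots> = (\<Prod>b\<in>Basis. (u - l) \<bullet> b)"
    by (simp add: Basis_vec_def cart_eq_inner_axis axis_eq_axis prod.UNION_disjoint inner_diff_left)
  finally show "emeasure (distr lborel borel Lc) (box l u) = (\<Prod>b\<in>Basis. (u - l) \<bullet> b)" .
qed simp



lemma Lc_inner: "Lc x \<bullet> Lc y = x \<bullet> y"
proof -
  have "Lc x \<bullet> Lc y = (\<Sum>i\<in>UNIV. (x \<bullet> Rep_bidx i) * (y \<bullet> Rep_bidx i))"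
    by (simp add: inner_vec_def Lc_def)
  also have "\<dots> = (\<Sum>b\<in>Basis. (x \<bullet> b) * (y \<bullet> b))"
    by (rule sum_bidx)
  also have "\<dots> = x \<bullet> y" by (rule euclidean_inner[symmetric])
  finally show ?thesis .
qed

lemma Li_inner2: "Li v \<bullet> Li w = v \<bullet> w"
  using Lc_inner[of "Li v" "Li w"] by simp

lemma lborel_orth:
  fixes U :: "'a::euclidean_space \<Rightarrow> 'a"
  assumes U: "orthogonal_transformation U"
  shows "distr lborel borel U = lborel"
proof -
  define V where "V = (\<lambda>v. Lc (U (Li v)))"
  have linU: "linear U" using U by (rule orthogonal_transformation_linear)
  have "linear V" unfolding V_def
    using linear_compose[OF linear_compose[OF linear_Li linU] linear_Lc]
    by (simp add: o_def)
  moreover have "V v \<bullet> V w = v \<bullet> w" for v w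
    using U by (simp add: V_def Lc_inner Li_inner2 orthogonal_transformation_def)
  ultimately have V: "orthogonal_transformation V"
    by (simp add: orthogonal_transformation_def)
  have Um[measurable]: "U \<in> borel_measurable borel"
    by (intro borel_measurable_continuous_onI linear_continuous_on) (use linU linear_linear in blast)
  have Vm[measurable]: "V \<in> borel_measurable borel"
    unfolding V_def by measurable
  have eqU: "U = Li \<circ> V \<circ> Lc" by (simp add: V_def fun_eq_iff)
  have "distr lborel borel U = distr (distr (distr lborel borel Lc) borel V) borel Li"
    by (simp add: distr_distr eqU comp_assoc)
  also have "\<dots> = distr lborel borel Li"
    by (simp add: distr_Lc lborel_orth_vec[OF V])
  also have "\<dots> = distr (distr lborel borel Lc) borel Li"
    by (simp add: distr_Lc)
  also have "\<dots> = distr lborel borel (\<lambda>x. x)"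
    by (simp add: distr_distr o_def)
  also have "\<dots> = lborel" by (rule distr_id2) simp
  finally show ?thesis .
qed


lemma unif_orth:
  fixes U :: "'a::euclidean_space \<Rightarrow> 'a"
  assumes U: "orthogonal_transformation U"
  shows "distr unif_sphere borel U = (unif_sphere :: 'a measure)"
proof -
  define B where "B = ball (0::'a) 1"
  define UM where "UM = uniform_measure lborel B"
  have linU: "linear U" using U by (rule orthogonal_transformation_linear)
  have Um[measurable]: "U \<in> borel_measurable borel"
    by (intro borel_measurable_continuous_onI linear_continuous_on) (use linU linear_linear in blast)
  have Bm[measurable]: "B \<in> sets borel" by (simp add: B_def)
  have UB: "U -` B = B"
    using orthogonal_transformation_norm[OF U] by (auto simp: B_def)
  have D: "distr UM borel U = UM"
  proof (rule measure_eqI)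
    show "sets (distr UM borel U) = sets UM" by (simp add: UM_def)
  next
    fix A assume "A \<in> sets (distr UM borel U)"
    then have A[measurable]: "A \<in> sets borel" by simp
    have Am: "U -` A \<in> sets borel" using measurable_sets_borel[OF Um A] .
    have "emeasure (distr UM borel U) A = emeasure UM (U -` A)"
      by (subst emeasure_distr) (simp_all add: UM_def)
    also have "\<dots> = emeasure lborel (B \<inter> U -` A) / emeasure lborel B"
      unfolding UM_def using Am by (subst emeasure_uniform_measure) simp_all
    also have "B \<inter> U -` A = U -` (B \<inter> A)" using UB by auto
    also have "emeasure lborel (U -` (B \<inter> A)) = emeasure (distr lborel borel U) (B \<inter> A)"
      by (subst emeasure_distr) simp_all
    also have "\<dots> = emeasure lborel (B \<inter> A)" by (simp add: lborel_orth[OF U])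
    also have "emeasure lborel (B \<inter> A) / emeasure lborel B = emeasure UM A"
      unfolding UM_def by (subst emeasure_uniform_measure) simp_all
    finally show "emeasure (distr UM borel U) A = emeasure UM A" .
  qed
  have comm: "U \<circ> (\<lambda>x. x /\<^sub>R norm x) = (\<lambda>x. x /\<^sub>R norm x) \<circ> U"
    by (simp add: fun_eq_iff orthogonal_transformation_scaleR[OF U] orthogonal_transformation_norm[OF U])
  have "distr unif_sphere borel U = distr (distr UM borel (\<lambda>x. x /\<^sub>R norm x)) borel U"
    by (simp add: unif_sphere_def UM_def B_def)
  also have "\<dots> = distr UM borel (U \<circ> (\<lambda>x. x /\<^sub>R norm x))"
    by (subst distr_distr) (simp_all add: UM_def)
  also have "\<dots> = distr (distr UM borel U) borel (\<lambda>x. x /\<^sub>R norm x)"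
    by (subst distr_distr) (simp_all add: UM_def comm)
  also have "\<dots> = distr UM borel (\<lambda>x. x /\<^sub>R norm x)" by (simp only: D)
  also have "\<dots> = unif_sphere" by (simp add: unif_sphere_def UM_def B_def)
  finally show ?thesis .
qed

lemma householder:
  fixes x y :: "'a::euclidean_space"
  assumes "norm x = norm y"
  obtains U where "orthogonal_transformation U" "U x = y"
proof (cases "x = y")
  case True
  then show ?thesis using that[of "\<lambda>v. v"] by simp
next
  case False
  define w where "w = x - y"
  have w0: "w \<bullet> w \<noteq> 0" using False by (simp add: w_def)
  have xx: "x \<bullet> x = y \<bullet> y" using assms by (simp add: dot_square_norm)
  have ww: "w \<bullet> w = 2 * (x \<bullet> w)"
    using xx by (simp add: w_def inner_diff_left inner_diff_right inner_commute)
  define U where "U = (\<lambda>v. v - (2 * (v \<bullet> w) / (w \<bullet> w)) *\<^sub>R w)"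
  have "linear U"
    unfolding U_def by (rule linearI) (simp_all add: inner_add_left algebra_simps add_divide_distrib)
  moreover have "U v \<bullet> U u = v \<bullet> u" for v u
    using w0 by (simp add: U_def inner_diff_left inner_diff_right inner_commute field_simps power2_eq_square)
  ultimately have "orthogonal_transformation U" by (simp add: orthogonal_transformation_def)
  moreover have "U x = y"
  proof -
    have "2 * (x \<bullet> w) / (w \<bullet> w) = 1" using w0 by (simp only: ww[symmetric]) simp
    moreover have "x \<bullet> w \<noteq> 0" using w0 ww by auto
    ultimately have "U x = x - w" by (simp add: U_def)
    then show ?thesis by (simp add: w_def)
  qed
  ultimately show ?thesis by (rule that)
qed



lemma sinh_convex: "convex_on {0..} (sinh :: real \<Rightarrow> real)"
proof (rule f''_ge0_imp_convex[where f' = cosh and f'' = sinh])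
  show "convex {0::real..}" by simp
  show "DERIV sinh x :> cosh x" for x :: real
    by (auto intro!: derivative_eq_intros)
  show "DERIV cosh x :> sinh x" for x :: real
    by (auto intro!: derivative_eq_intros)
  show "x \<in> {0..} \<Longrightarrow> 0 \<le> sinh x" for x :: real by simp
qed

lemma sinh_ratio_mono:
  fixes s t \<beta> :: real
  assumes "0 < s" "s \<le> t" "0 \<le> \<beta>"
  shows "t * sinh (\<beta> * s) \<le> s * sinh (\<beta> * t)"
proof -
  have t0: "0 < t" using assms by linarith
  have "sinh ((1 - s/t) *\<^sub>R 0 + (s/t) *\<^sub>R (\<beta> * t)) \<le> (1 - s/t) * sinh 0 + (s/t) * sinh (\<beta> * t)"
    by (rule convex_onD[OF sinh_convex]) (use assms t0 in auto)
  then have "sinh (\<beta> * s) \<le> (s/t) * sinh (\<beta> * t)" using t0 by (simp add: ac_simps)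
  then have "t * sinh (\<beta> * s) \<le> t * ((s/t) * sinh (\<beta> * t))"
    using t0 by (intro mult_left_mono) auto
  also have "\<dots> = s * sinh (\<beta> * t)" using t0 by simp
  finally show ?thesis .
qed

lemma cosh_tangent_pos:
  fixes b c s :: real
  assumes c: "0 < c" and s: "0 \<le> s" and b: "0 \<le> b"
  shows "cosh (b*c) + b * sinh (b*c) / (2*c) * (s\<^sup>2 - c\<^sup>2) \<le> cosh (b * s)"
proof -
  define K where "K = b * sinh (b*c) / (2*c)"
  define F where "F = (\<lambda>s. cosh (b * s) - K * s\<^sup>2)"
  define F' where "F' = (\<lambda>z. b * sinh (b*z) - K * (2*z))"
  have D: "DERIV F z :> F' z" for z
    unfolding F_def F'_def by (auto intro!: derivative_eq_intros simp: power2_eq_square algebra_simps)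
  have F'c: "c * F' z = b * (c * sinh (b*z) - z * sinh (b*c))" for z
    using c by (simp add: F'_def K_def field_simps)
  have "F c \<le> F s"
  proof (cases s c rule: linorder_cases)
    case less
    obtain z where z: "s < z" "z < c" "F c - F s = (c - s) * F' z"
      using MVT2[OF less D] by blast
    have "c * sinh (b*z) \<le> z * sinh (b*c)"
      using sinh_ratio_mono[of z c b] z s b by (simp add: mult.commute)
    then have "c * F' z \<le> 0" using F'c b by (simp add: mult_nonneg_nonpos)
    then have "F' z \<le> 0" using c by (simp add: mult_le_0_iff)
    have "(c - s) * F' z \<le> 0" by (rule mult_nonneg_nonpos) (use z \<open>F' z \<le> 0\<close> in auto)
    then show ?thesis using z(3) by linarith
  next
    case equal then show ?thesis by simp
  next
    case greater
    obtain z where z: "c < z" "z < s" "F s - F c = (s - c) * F' z"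
      using MVT2[OF greater D] by blast
    have "z * sinh (b*c) \<le> c * sinh (b*z)"
      using sinh_ratio_mono[of c z b] z c b by (simp add: mult.commute)
    then have "0 \<le> c * F' z" using F'c b by simp
    then have "0 \<le> F' z" using c by (simp add: zero_le_mult_iff)
    have "0 \<le> (s - c) * F' z" by (rule mult_nonneg_nonneg) (use z \<open>0 \<le> F' z\<close> in auto)
    then show ?thesis using z(3) by linarith
  qed
  then have "cosh (b*c) - K * c\<^sup>2 \<le> cosh (b * s) - K * s\<^sup>2" by (simp add: F_def)
  then have "cosh (b*c) + K * (s\<^sup>2 - c\<^sup>2) \<le> cosh (b * s)" by (simp add: right_diff_distrib)
  then show ?thesis by (simp only: K_def)
qed

lemma cosh_tangent:
  fixes b c s :: real
  assumes c: "0 < c" and s: "0 \<le> s"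
  shows "cosh (b*c) + b * sinh (b*c) / (2*c) * (s\<^sup>2 - c\<^sup>2) \<le> cosh (b * s)"
proof (cases "0 \<le> b")
  case True then show ?thesis using cosh_tangent_pos[OF c s] by blast
next
  case False
  have "cosh ((-b)*c) + (-b) * sinh ((-b)*c) / (2*c) * (s\<^sup>2 - c\<^sup>2) \<le> cosh ((-b) * s)"
    using cosh_tangent_pos[OF c s, of "-b"] False by simp
  then show ?thesis by simp
qed



lemma sets_unif[measurable_cong]: "sets (unif_sphere::'a::euclidean_space measure) = sets borel"
  by (simp add: unif_sphere_def)

lemma space_unif[simp]: "space (unif_sphere::'a::euclidean_space measure) = UNIV"
  by (simp add: unif_sphere_def)

lemma AE_unif_norm: "AE x in (unif_sphere::'a::euclidean_space measure). norm x = 1"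
proof -
  have "AE x in uniform_measure lborel (ball (0::'a) 1). x \<noteq> 0"
    by (rule AE_uniform_measureI) (auto intro: AE_mp[OF AE_lborel_singleton[of 0]])
  then have "AE x in uniform_measure lborel (ball (0::'a) 1). norm (x /\<^sub>R norm x) = 1"
    by eventually_elim simp
  then show ?thesis unfolding unif_sphere_def
    by (subst AE_distr_iff) simp_all
qed

lemma unif_nn_orth:
  fixes U :: "'a::euclidean_space \<Rightarrow> 'a"
  assumes U: "orthogonal_transformation U" and f[measurable]: "f \<in> borel_measurable borel"
  shows "(\<integral>\<^sup>+z. f (U z) \<partial>unif_sphere) = (\<integral>\<^sup>+z. f z \<partial>unif_sphere)"
proof -
  have linU: "linear U" using U by (rule orthogonal_transformation_linear)
  have Um[measurable]: "U \<in> borel_measurable borel"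
    by (intro borel_measurable_continuous_onI linear_continuous_on) (use linU linear_linear in blast)
  have "(\<integral>\<^sup>+z. f z \<partial>unif_sphere) = (\<integral>\<^sup>+z. f z \<partial>(distr unif_sphere borel U))"
    by (simp add: unif_orth[OF U])
  also have "\<dots> = (\<integral>\<^sup>+z. f (U z) \<partial>unif_sphere)"
    by (rule nn_integral_distr) simp_all
  finally show ?thesis ..
qed

lemma cosh_le_exp_abs: "cosh (z::real) \<le> exp \<bar>z\<bar>"
  unfolding cosh_def by (cases "0 \<le> z") (auto intro: order_trans[OF _ exp_ge_zero])



lemma key:
  fixes M :: "'s measure" and N :: "'t measure"
    and X :: "'s \<Rightarrow> 'a::euclidean_space" and \<theta> :: "'t \<Rightarrow> 'a"
  assumes PM: "prob_space M" and Xm[measurable]: "X \<in> borel_measurable M"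
    and rot: "rot_invariant M X" and iso: "isotropic M X"
    and PN: "prob_space N" and Tm[measurable]: "\<theta> \<in> borel_measurable N"
    and dist: "distr N borel \<theta> = unif_sphere"
  shows "\<exists>r\<ge>1. (\<integral>\<^sup>+\<omega>. ennreal (exp ((sqrt (real DIM('a)) *\<^sub>R \<theta> \<omega>) \<bullet> \<xi>)) \<partial>N) = ennreal r
           \<and> ennreal r \<le> (\<integral>\<^sup>+\<omega>. ennreal (exp (X \<omega> \<bullet> \<xi>)) \<partial>M)"
proof -
  interpret M: prob_space M by (rule PM)
  interpret N: prob_space N by (rule PN)
  interpret MN: pair_sigma_finite M N
    by (simp add: pair_sigma_finite_def M.sigma_finite_measure_axioms N.sigma_finite_measure_axioms)
  define n where "n = real DIM('a)"
  define c where "c = sqrt n"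
  have n0: "0 < n" by (simp add: n_def)
  have c0: "0 < c" using n0 by (simp add: c_def)
  have cn: "c\<^sup>2 = n" using n0 by (simp add: c_def)
  have unit: "AE \<nu> in N. norm (\<theta> \<nu>) = 1"
  proof -
    have "AE x in distr N borel \<theta>. norm x = 1" unfolding dist by (rule AE_unif_norm)
    then show ?thesis by (subst (asm) AE_distr_iff) simp_all
  qed
  show ?thesis
  proof (cases "\<xi> = 0")
    case True
    then show ?thesis
      by (intro exI[of _ 1]) (simp add: M.emeasure_space_1 N.emeasure_space_1)
  next
    case False
    define a where "a = norm \<xi>"
    have a0: "0 < a" using False by (simp add: a_def)
    define e where "e = \<xi> /\<^sub>R a"
    have ne: "norm e = 1" using a0 by (simp add: e_def a_def)
    define \<Phi> where "\<Phi> = (\<lambda>x. \<integral>\<^sup>+\<nu>. ennreal (exp (a * (x \<bullet> \<theta> \<nu>))) \<partial>N)"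
    have \<Phi>_unif: "\<Phi> x = (\<integral>\<^sup>+z. ennreal (exp (a * (x \<bullet> z))) \<partial>unif_sphere)" for x
    proof -
      have "(\<integral>\<^sup>+z. ennreal (exp (a * (x \<bullet> z))) \<partial>distr N borel \<theta>) = \<Phi> x"
        unfolding \<Phi>_def by (rule nn_integral_distr) simp_all
      then show ?thesis using dist by simp
    qed
    have S: "\<Phi> x = \<Phi> y" if xy: "norm x = norm y" for x y
    proof -
      obtain U where U: "orthogonal_transformation U" "U x = y"
        using householder[OF xy] by blast
      have "\<Phi> x = (\<integral>\<^sup>+z. ennreal (exp (a * (y \<bullet> U z))) \<partial>unif_sphere)"
        unfolding \<Phi>_unif using U by (metis orthogonal_transformation_def)
      also have "\<dots> = \<Phi> y"
        unfolding \<Phi>_unif by (rule unif_nn_orth[OF U(1), of "\<lambda>z. ennreal (exp (a * (y \<bullet> z)))"]) simp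
      finally show ?thesis .
    qed
    have rotX: "(\<integral>\<^sup>+\<omega>. ennreal (exp (X \<omega> \<bullet> v)) \<partial>M) = (\<integral>\<^sup>+\<omega>. ennreal (exp (X \<omega> \<bullet> \<xi>)) \<partial>M)"
      if xy: "norm v = norm \<xi>" for v
    proof -
      obtain U where U: "orthogonal_transformation U" "U v = \<xi>"
        using householder[OF xy] by blast
      have linU: "linear U" using U by (simp add: orthogonal_transformation_linear)
      have Um[measurable]: "U \<in> borel_measurable borel"
        by (intro borel_measurable_continuous_onI linear_continuous_on) (use linU linear_linear in blast)
      have "(\<integral>\<^sup>+\<omega>. ennreal (exp (X \<omega> \<bullet> v)) \<partial>M) = (\<integral>\<^sup>+\<omega>. ennreal (exp (U (X \<omega>) \<bullet> \<xi>)) \<partial>M)"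
        using U by (metis orthogonal_transformation_def)
      also have "\<dots> = (\<integral>\<^sup>+y. ennreal (exp (y \<bullet> \<xi>)) \<partial>distr M borel (\<lambda>\<omega>. U (X \<omega>)))"
        by (rule nn_integral_distr[symmetric]) simp_all
      also have "\<dots> = (\<integral>\<^sup>+y. ennreal (exp (y \<bullet> \<xi>)) \<partial>distr M borel X)"
        using rot U(1) by (simp add: rot_invariant_def)
      also have "\<dots> = (\<integral>\<^sup>+\<omega>. ennreal (exp (X \<omega> \<bullet> \<xi>)) \<partial>M)"
        by (rule nn_integral_distr) simp_all
      finally show ?thesis .
    qed
    have L: "(\<integral>\<^sup>+\<omega>. ennreal (exp (X \<omega> \<bullet> \<xi>)) \<partial>M) = (\<integral>\<^sup>+\<omega>. \<Phi> (X \<omega>) \<partial>M)"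
    proof -
      have "(\<integral>\<^sup>+\<omega>. ennreal (exp (X \<omega> \<bullet> \<xi>)) \<partial>M)
          = (\<integral>\<^sup>+\<nu>. (\<integral>\<^sup>+\<omega>. ennreal (exp (X \<omega> \<bullet> \<xi>)) \<partial>M) \<partial>N)"
        by (simp add: N.emeasure_space_1)
      also have "\<dots> = (\<integral>\<^sup>+\<nu>. (\<integral>\<^sup>+\<omega>. ennreal (exp (a * (X \<omega> \<bullet> \<theta> \<nu>))) \<partial>M) \<partial>N)"
      proof (rule nn_integral_cong_AE)
        show "AE \<nu> in N. (\<integral>\<^sup>+\<omega>. ennreal (exp (X \<omega> \<bullet> \<xi>)) \<partial>M)
              = (\<integral>\<^sup>+\<omega>. ennreal (exp (a * (X \<omega> \<bullet> \<theta> \<nu>))) \<partial>M)"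
          using unit
        proof eventually_elim
          case (elim \<nu>)
          have "norm (a *\<^sub>R \<theta> \<nu>) = norm \<xi>" using elim a0 by (simp add: a_def)
          from rotX[OF this] show ?case by simp
        qed
      qed
      also have "\<dots> = (\<integral>\<^sup>+\<omega>. (\<integral>\<^sup>+\<nu>. ennreal (exp (a * (X \<omega> \<bullet> \<theta> \<nu>))) \<partial>N) \<partial>M)"
        by (rule MN.Fubini') measurable
      finally show ?thesis by (simp add: \<Phi>_def)
    qed
    define bb where "bb = (\<lambda>\<nu>. a * (e \<bullet> \<theta> \<nu>))"
    have bb_bound: "AE \<nu> in N. \<bar>bb \<nu>\<bar> \<le> a"
      using unit
    proof eventually_elim
      case (elim \<nu>)
      have "\<bar>e \<bullet> \<theta> \<nu>\<bar> \<le> 1" using Cauchy_Schwarz_ineq2[of e "\<theta> \<nu>"] elim ne by simp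
      then show ?case using a0 by (simp add: bb_def abs_mult)
    qed
    have bbm[measurable]: "bb \<in> borel_measurable N" unfolding bb_def by measurable
    have integ: "integrable N (\<lambda>\<nu>. g (bb \<nu>))" if g: "continuous_on UNIV g" for g :: "real \<Rightarrow> real"
    proof -
      have "compact (g ` {-a..a})"
        by (rule compact_continuous_image) (use g continuous_on_subset in auto)
      then obtain B where B: "\<And>y. y \<in> g ` {-a..a} \<Longrightarrow> norm y \<le> B"
        using compact_imp_bounded bounded_iff by metis
      have gm[measurable]: "g \<in> borel_measurable borel"
        using g by (rule borel_measurable_continuous_onI)
      show ?thesis
      proof (rule N.integrable_const_bound[where B = B])
        show "AE \<nu> in N. norm (g (bb \<nu>)) \<le> B"
          using bb_bound
        proof eventually_elim
          case (elim \<nu>)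
          then have "bb \<nu> \<in> {-a..a}" by (auto simp: abs_le_iff)
          then show ?case by (intro B imageI)
        qed
      qed measurable
    qed
    define \<phi> where "\<phi> = (\<lambda>t. \<integral>\<nu>. cosh (bb \<nu> * t) \<partial>N)"
    have int_cosh: "integrable N (\<lambda>\<nu>. cosh (bb \<nu> * t))" for t
      by (rule integ[of "\<lambda>y. cosh (y * t)", simplified]) (intro continuous_intros)
    have C: "\<Phi> (t *\<^sub>R e) = ennreal (\<phi> t)" for t
    proof -
      have e1: "\<Phi> (t *\<^sub>R e) = (\<integral>\<^sup>+\<nu>. ennreal (exp (bb \<nu> * t)) \<partial>N)"
        unfolding \<Phi>_def bb_def by (simp add: ac_simps)
      have e2: "\<Phi> (t *\<^sub>R e) = \<Phi> ((-t) *\<^sub>R e)" by (rule S) simp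
      have e3: "\<Phi> ((-t) *\<^sub>R e) = (\<integral>\<^sup>+\<nu>. ennreal (exp (- (bb \<nu> * t))) \<partial>N)"
        unfolding \<Phi>_def bb_def by (simp add: ac_simps)
      have h: "ennreal (1/2) * (2::ennreal) = 1"
      proof -
        have "ennreal (1/2) * ennreal 2 = ennreal ((1/2) * 2)" by (rule ennreal_mult[symmetric]) auto
        then show ?thesis by simp
      qed
      have pt2: "ennreal (1/2) * (ennreal p + ennreal q) = ennreal ((p + q) / 2)"
        if "0 \<le> p" "0 \<le> q" for p q :: real
      proof -
        have "ennreal (1/2) * (ennreal p + ennreal q) = ennreal (1/2) * ennreal (p + q)"
          by (subst ennreal_plus) (use that in auto)
        also have "\<dots> = ennreal (1/2 * (p + q))" by (rule ennreal_mult[symmetric]) (use that in auto)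
        also have "1/2 * (p + q) = (p + q) / 2" by simp
        finally show ?thesis .
      qed
      have "\<Phi> (t *\<^sub>R e) = ennreal (1/2) * (\<Phi> (t *\<^sub>R e) + \<Phi> ((-t) *\<^sub>R e))"
        using h e2 by (simp add: mult_2[symmetric] mult.assoc[symmetric])
      also have "\<dots> = ennreal (1/2) * (\<integral>\<^sup>+\<nu>. ennreal (exp (bb \<nu> * t)) + ennreal (exp (- (bb \<nu> * t))) \<partial>N)"
        unfolding e1 e3 by (subst nn_integral_add) simp_all
      also have "\<dots> = (\<integral>\<^sup>+\<nu>. ennreal (1/2) * (ennreal (exp (bb \<nu> * t)) + ennreal (exp (- (bb \<nu> * t)))) \<partial>N)"
        by (subst nn_integral_cmult) simp_all
      also have "\<dots> = (\<integral>\<^sup>+\<nu>. ennreal (cosh (bb \<nu> * t)) \<partial>N)"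
      proof (intro nn_integral_cong)
        fix \<nu>
        show "ennreal (1/2) * (ennreal (exp (bb \<nu> * t)) + ennreal (exp (- (bb \<nu> * t)))) = ennreal (cosh (bb \<nu> * t))"
          unfolding cosh_field_def by (rule pt2) simp_all
      qed
      also have "\<dots> = ennreal (\<phi> t)"
        unfolding \<phi>_def by (rule nn_integral_eq_integral[OF int_cosh]) simp
      finally show ?thesis .
    qed
    define K where "K = (\<lambda>\<nu>. bb \<nu> * sinh (bb \<nu> * c) / (2*c))"
    define \<kappa> where "\<kappa> = (\<integral>\<nu>. K \<nu> \<partial>N)"
    have int_K: "integrable N K"
    proof -
      have "continuous_on UNIV (\<lambda>y. y * sinh (y * c) / (2*c))"
        using c0 by (intro continuous_intros) auto
      from integ[OF this] show ?thesis by (simp add: K_def)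
    qed
    have K0: "0 \<le> K \<nu>" for \<nu>
    proof -
      have "0 \<le> bb \<nu> * sinh (bb \<nu> * c)"
        using c0 by (cases "0 \<le> bb \<nu>") (auto simp: zero_le_mult_iff mult_nonpos_nonpos mult_nonpos_nonneg)
      then show ?thesis using c0 by (simp add: K_def)
    qed
    have \<kappa>0: "0 \<le> \<kappa>" unfolding \<kappa>_def by (rule integral_nonneg_AE) (simp add: K0)
    have \<phi>0: "0 \<le> \<phi> t" for t unfolding \<phi>_def by (rule integral_nonneg_AE) simp
    have \<phi>1: "1 \<le> \<phi> c"
    proof -
      have "(\<integral>\<nu>. 1 \<partial>N) \<le> \<phi> c"
        unfolding \<phi>_def by (rule integral_mono) (simp_all add: int_cosh cosh_real_ge_1)
      then show ?thesis by (simp add: N.prob_space)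
    qed
    have T: "\<phi> c + \<kappa> * (t\<^sup>2 - c\<^sup>2) \<le> \<phi> t" if t: "0 \<le> t" for t
    proof -
      have "(\<integral>\<nu>. cosh (bb \<nu> * c) + K \<nu> * (t\<^sup>2 - c\<^sup>2) \<partial>N) \<le> \<phi> t"
        unfolding \<phi>_def
      proof (rule integral_mono)
        show "integrable N (\<lambda>\<nu>. cosh (bb \<nu> * c) + K \<nu> * (t\<^sup>2 - c\<^sup>2))"
          using int_cosh int_K by simp
        show "integrable N (\<lambda>\<nu>. cosh (bb \<nu> * t))" by (rule int_cosh)
        show "cosh (bb \<nu> * c) + K \<nu> * (t\<^sup>2 - c\<^sup>2) \<le> cosh (bb \<nu> * t)" for \<nu>
          using cosh_tangent[OF c0 t, of "bb \<nu>"] by (simp add: K_def)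
      qed
      moreover have "(\<integral>\<nu>. cosh (bb \<nu> * c) + K \<nu> * (t\<^sup>2 - c\<^sup>2) \<partial>N) = \<phi> c + \<kappa> * (t\<^sup>2 - c\<^sup>2)"
        unfolding \<phi>_def \<kappa>_def using int_cosh int_K by simp
      ultimately show ?thesis by simp
    qed
    have normsq: "(\<integral>\<^sup>+\<omega>. ennreal ((norm (X \<omega>))\<^sup>2) \<partial>M) = ennreal n"
    proof -
      have eq: "(norm (X \<omega>))\<^sup>2 = (\<Sum>b\<in>Basis. (X \<omega> \<bullet> b)\<^sup>2)" for \<omega>
      proof -
        have "(norm (X \<omega>))\<^sup>2 = X \<omega> \<bullet> X \<omega>" by (rule power2_norm_eq_inner)
        also have "\<dots> = (\<Sum>b\<in>Basis. (X \<omega> \<bullet> b) * (X \<omega> \<bullet> b))" by (rule euclidean_inner)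
        also have "\<dots> = (\<Sum>b\<in>Basis. (X \<omega> \<bullet> b)\<^sup>2)" by (simp add: power2_eq_square)
        finally show ?thesis .
      qed
      have ib: "b \<in> Basis \<Longrightarrow> integrable M (\<lambda>\<omega>. (X \<omega> \<bullet> b)\<^sup>2) \<and> (\<integral>\<omega>. (X \<omega> \<bullet> b)\<^sup>2 \<partial>M) = 1" for b
        using iso by (simp add: isotropic_def)
      have "(\<integral>\<^sup>+\<omega>. ennreal (\<Sum>b\<in>Basis. (X \<omega> \<bullet> b)\<^sup>2) \<partial>M) = ennreal (\<integral>\<omega>. (\<Sum>b\<in>Basis. (X \<omega> \<bullet> b)\<^sup>2) \<partial>M)"
        by (rule nn_integral_eq_integral) (auto intro!: integrable_sum simp: ib sum_nonneg)
      also have "(\<integral>\<omega>. (\<Sum>b\<in>Basis. (X \<omega> \<bullet> b)\<^sup>2) \<partial>M) = (\<Sum>b\<in>(Basis::'a set). 1)"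
      proof -
        have "(\<integral>\<omega>. (\<Sum>b\<in>Basis. (X \<omega> \<bullet> b)\<^sup>2) \<partial>M) = (\<Sum>b\<in>Basis. (\<integral>\<omega>. (X \<omega> \<bullet> b)\<^sup>2 \<partial>M))"
          by (rule Bochner_Integration.integral_sum) (simp add: ib)
        also have "\<dots> = (\<Sum>b\<in>(Basis::'a set). 1)"
          by (rule sum.cong) (simp_all add: ib)
        finally show ?thesis .
      qed
      finally show ?thesis by (simp add: eq n_def)
    qed
    have R: "(\<integral>\<^sup>+\<omega>. ennreal (exp ((sqrt (real DIM('a)) *\<^sub>R \<theta> \<omega>) \<bullet> \<xi>)) \<partial>N) = \<Phi> (c *\<^sub>R e)"
      unfolding \<Phi>_def
    proof (intro nn_integral_cong)
      fix \<nu>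
      have "(sqrt (real DIM('a)) *\<^sub>R \<theta> \<nu>) \<bullet> \<xi> = a * ((c *\<^sub>R e) \<bullet> \<theta> \<nu>)"
        using a0 by (simp add: c_def n_def e_def inner_commute)
      then show "ennreal (exp ((sqrt (real DIM('a)) *\<^sub>R \<theta> \<nu>) \<bullet> \<xi>)) = ennreal (exp (a * ((c *\<^sub>R e) \<bullet> \<theta> \<nu>)))"
        by simp
    qed
    have \<Phi>X: "\<Phi> (X \<omega>) = ennreal (\<phi> (norm (X \<omega>)))" for \<omega>
    proof -
      have "\<Phi> (X \<omega>) = \<Phi> (norm (X \<omega>) *\<^sub>R e)" by (rule S) (simp add: ne)
      then show ?thesis by (simp add: C)
    qed
    have \<Phi>Xm[measurable]: "(\<lambda>\<omega>. \<Phi> (X \<omega>)) \<in> borel_measurable M"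
      unfolding \<Phi>_def by measurable
    have J: "ennreal (\<phi> c) \<le> (\<integral>\<^sup>+\<omega>. \<Phi> (X \<omega>) \<partial>M)"
    proof -
      have pt: "ennreal (\<phi> c) + ennreal (\<kappa> * (norm (X \<omega>))\<^sup>2) \<le> \<Phi> (X \<omega>) + ennreal (\<kappa> * n)" for \<omega>
      proof -
        have "\<phi> c + \<kappa> * (norm (X \<omega>))\<^sup>2 \<le> \<phi> (norm (X \<omega>)) + \<kappa> * n"
          using T[of "norm (X \<omega>)"] cn by (simp add: algebra_simps)
        then have "ennreal (\<phi> c + \<kappa> * (norm (X \<omega>))\<^sup>2) \<le> ennreal (\<phi> (norm (X \<omega>)) + \<kappa> * n)"
          by (rule ennreal_leI)
        then show ?thesis using \<phi>0 \<kappa>0 n0 by (simp add: \<Phi>X ennreal_plus[symmetric] del: ennreal_plus)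
      qed
      have "ennreal (\<kappa> * n) + ennreal (\<phi> c) = ennreal (\<phi> c) + ennreal \<kappa> * (\<integral>\<^sup>+\<omega>. ennreal ((norm (X \<omega>))\<^sup>2) \<partial>M)"
        using normsq \<kappa>0 by (simp add: ennreal_mult' add.commute)
      also have "\<dots> = (\<integral>\<^sup>+\<omega>. ennreal (\<phi> c) + ennreal (\<kappa> * (norm (X \<omega>))\<^sup>2) \<partial>M)"
        using \<kappa>0 by (simp add: nn_integral_add nn_integral_cmult ennreal_mult' M.emeasure_space_1)
      also have "\<dots> \<le> (\<integral>\<^sup>+\<omega>. \<Phi> (X \<omega>) + ennreal (\<kappa> * n) \<partial>M)"
        by (rule nn_integral_mono) (rule pt)
      also have "\<dots> = ennreal (\<kappa> * n) + (\<integral>\<^sup>+\<omega>. \<Phi> (X \<omega>) \<partial>M)"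
        by (simp add: nn_integral_add M.emeasure_space_1 add.commute)
      finally show ?thesis by (simp add: ennreal_add_left_cancel_le)
    qed
    show ?thesis
      by (intro exI[of _ "\<phi> c"]) (use \<phi>1 R C J L in simp)
  qed
qed


theorem proposition4p2:
  fixes M :: "'s measure" and N :: "'t measure"
    and X :: "'s \<Rightarrow> 'a::euclidean_space" and \<theta> :: "'t \<Rightarrow> 'a"
  assumes "prob_space M" and "X \<in> borel_measurable M"
    and "rot_invariant M X" and "isotropic M X"
    and "prob_space N" and "\<theta> \<in> borel_measurable N"
    and "distr N borel \<theta> = unif_sphere"
  shows "(\<forall>\<xi>. log_laplace M X \<xi> \<ge> log_laplace N (\<lambda>\<omega>. sqrt (real DIM('a)) *\<^sub>R \<theta> \<omega>) \<xi>)
       \<and> (\<forall>x. legendre (log_laplace M X) x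
               \<le> legendre (log_laplace N (\<lambda>\<omega>. sqrt (real DIM('a)) *\<^sub>R \<theta> \<omega>)) x)"
proof -
  have ll: "log_laplace N (\<lambda>\<omega>. sqrt (real DIM('a)) *\<^sub>R \<theta> \<omega>) \<xi> \<le> log_laplace M X \<xi>" for \<xi>
  proof -
    obtain r where r: "r \<ge> 1"
      "(\<integral>\<^sup>+\<omega>. ennreal (exp ((sqrt (real DIM('a)) *\<^sub>R \<theta> \<omega>) \<bullet> \<xi>)) \<partial>N) = ennreal r"
      "ennreal r \<le> (\<integral>\<^sup>+\<omega>. ennreal (exp (X \<omega> \<bullet> \<xi>)) \<partial>M)"
      using key[OF assms, of \<xi>] by blast
    define A where "A = (\<integral>\<^sup>+\<omega>. ennreal (exp (X \<omega> \<bullet> \<xi>)) \<partial>M)"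
    have LN: "log_laplace N (\<lambda>\<omega>. sqrt (real DIM('a)) *\<^sub>R \<theta> \<omega>) \<xi> = ereal (ln r)"
      using r(1,2) by (simp add: log_laplace_def Let_def)
    show ?thesis
    proof (cases "A = \<infinity>")
      case True
      then show ?thesis by (simp add: log_laplace_def Let_def A_def[symmetric])
    next
      case False
      have rA: "ennreal r \<le> A" using r(3) by (simp add: A_def)
      have "enn2real (ennreal r) \<le> enn2real A"
        by (rule enn2real_mono[OF rA]) (use False in \<open>simp add: less_top\<close>)
      then have "r \<le> enn2real A" using r(1) by simp
      then have "ln r \<le> ln (enn2real A)" using r(1) by simp
      then show ?thesis using False LN by (simp add: log_laplace_def Let_def A_def[symmetric])
    qed
  qed
  show ?thesis
  proof (intro conjI allI)
    fix \<xi> show "log_laplace N (\<lambda>\<omega>. sqrt (real DIM('a)) *\<^sub>R \<theta> \<omega>) \<xi> \<le> log_laplace M X \<xi>"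
      by (rule ll)
  next
    fix x
    show "legendre (log_laplace M X) x \<le> legendre (log_laplace N (\<lambda>\<omega>. sqrt (real DIM('a)) *\<^sub>R \<theta> \<omega>)) x"
      unfolding legendre_def
    proof (rule SUP_mono)
      fix n :: 'a assume "n \<in> UNIV"
      show "\<exists>m\<in>UNIV. ereal (x \<bullet> n) - log_laplace M X n
              \<le> ereal (x \<bullet> m) - log_laplace N (\<lambda>\<omega>. sqrt (real DIM('a)) *\<^sub>R \<theta> \<omega>) m"
        by (rule bexI[of _ n]) (rule ereal_minus_mono[OF order_refl ll], simp)
    qed
  qed
qed

end
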